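(* Let $\mathbf b_i\in\mathcal B_k$ be a boundary point of $P(A)$. Let $\beta_1,\dots,\beta_{R_k+1}$ be the elements of $\{1/\ell_0,2/\ell_0,\dots,\ell_0/\ell_0\}$ not of the form $1-s_0^{(j)}/\ell_0$ with $\mathbf b_j\in\mathcal B_k$ a boundary point of $P(A)$ and $\mathbf b_j\neq\mathbf b_i$ (one may take $\beta_1=1$), and let $\alpha_1,\dots,\alpha_{R_k+1}$ be the elements remaining on the list $\frac{v^{(i)}_r+\sigma}{\ell_r}$ ($r=1,\dots,m$, $\sigma=0,\dots,\ell_r-1$) after one copy of each element $1-s_0^{(j)}/\ell_0$ with $\mathbf b_j\in\mathcal B_k$ a boundary point of $P(A)$, $\mathbf b_j\ne\mathbf b_i$, has been removed. Then the $R_k+1$ series $F^{(\mathbf b_j)}_{\mathbf b_i}(\lambda)$ with $\mathbf b_j\in\mathcal B_k$ either an interior point of $P(A)$ or equal to $\mathbf b_i$ are obtained from a full set of solutions at $x=0$ of the hypergeometric operator \[(\delta_x+\beta_1-1)\cdots(\delta_x+\beta_{R_k+1}-1)-x(\delta_x+\alpha_1)\cdots(\delta_x+\alpha_{R_k+1}),\qquad\delta_x=x\tfrac{d}{dx},\] by replacing $x$ by $\lambda^{\ell_0}$; that is, $F^{(\mathbf b_j)}_{\mathbf b_i}(\lambda)=H_j(\lambda^{\ell_0})$ where the $H_j(x)$ (formal series in $x^{s_0^{(j)}/\ell_0}\mathbb C[[x]]$) form a full set of solutions of this operator at $x=0$.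
   Context: Let $A=\{\mathbf a_1,\dots,\mathbf a_m\}\subseteq\mathbb Z^n$ be linearly independent over $\mathbb R$, $\mathbf a_0\in\mathbb Z^n$, and $\ell_0,\dots,\ell_m$ positive integers with gcd $1$, $\ell_0\mathbf a_0=\sum_{j=1}^m\ell_j\mathbf a_j$, $\ell_0=\sum_{j=1}^m\ell_j$. Let $\mathbb ZA$, $\mathbb ZA_+$ be the groups generated by $A$ and $A\cup\{\mathbf a_0\}$. Let $V$ be the real span of $A$, $V_{\mathbb Z}=V\cap\mathbb Z^n$, $P(A)=\{\sum_jc_j\mathbf a_j:0\le c_j<1\}$, $\mathcal B=V_{\mathbb Z}\cap P(A)$. Each $\mathbf b\in\mathcal B$ is written uniquely $\mathbf b=\sum_rv_r\mathbf a_r$ with $v_r\in[0,1)$; $\mathbf b$ is an interior point of $P(A)$ if all $v_r>0$ and a boundary point otherwise. Fix a coset $\mathcal C_k$ of $\mathbb ZA_+$ in $V_{\mathbb Z}$, put $\mathcal B_k=\mathcal B\cap\mathcal C_k$ (it has $\ell_0$ elements), and let $R_k$ be the number of interior points of $P(A)$ in $\mathcal B_k$. Fix $\mathbf b_i\in\mathcal B_k$. For $\mathbf b_j\in\mathcal B_k$ write $\mathbf b_j=\sum_rv^{(j)}_r\mathbf a_r$, let $s_0^{(j)}\in\{0,\dots,\ell_0-1\}$ be the unique element with $\mathbf b_i+s_0^{(j)}\mathbf a_0\equiv\mathbf b_j\pmod{\mathbb ZA}$, and let $s^{(j)}_r\in\mathbb Z$ ($r=1,\dots,m$) be determined by $\mathbf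 b_i+s_0^{(j)}\mathbf a_0=\mathbf b_j-\sum_rs^{(j)}_r\mathbf a_r$. Define \[F^{(\mathbf b_j)}_{\mathbf b_i}(\lambda)=\lambda^{s_0^{(j)}}\sum_{s=0}^\infty\frac{\prod_{r=1}^m\prod_{\sigma=0}^{\ell_r-1}\big(\frac{v^{(j)}_r-s^{(j)}_r+\sigma}{\ell_r}\big)_s}{\prod_{t=1}^{\ell_0}\big(\frac{s^{(j)}_0+t}{\ell_0}\big)_s}\lambda^{s\ell_0},\] with $(a)_s=a(a+1)\cdots(a+s-1)$. *)

theory Defs
  imports "HOL-Analysis.Analysis" "HOL-Computational_Algebra.Formal_Power_Series"
    "HOL-Library.Multiset"
begin

text \<open>Integer points of R^n are represented as real vectors with integer coordinates.
  The family A is a 1..m, and a 0 is the extra vector a_0; l j are the weights.\<close>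

definition intvec :: "real^'n \<Rightarrow> bool" where
  "intvec x \<longleftrightarrow> (\<forall>i. x $ i \<in> \<int>)"

definition ZA :: "(nat \<Rightarrow> real^'n) \<Rightarrow> nat \<Rightarrow> (real^'n) set" where
  "ZA a m = {(\<Sum>j\<in>{1..m}. of_int (c j) *\<^sub>R a j) | c. True}"

definition ZAplus :: "(nat \<Rightarrow> real^'n) \<Rightarrow> nat \<Rightarrow> (real^'n) set" where
  "ZAplus a m = {(\<Sum>j\<in>{0..m}. of_int (c j) *\<^sub>R a j) | c. True}"

definition VZ :: "(nat \<Rightarrow> real^'n) \<Rightarrow> nat \<Rightarrow> (real^'n) set" where
  "VZ a m = {x. x \<in> span (a ` {1..m}) \<and> intvec x}"

definition coord :: "(nat \<Rightarrow> real^'n) \<Rightarrow> nat \<Rightarrow> real^'n \<Rightarrow> nat \<Rightarrow> real" where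
  "coord a m x = (THE c. (\<forall>j. j \<notin> {1..m} \<longrightarrow> c j = 0) \<and>
                          x = (\<Sum>j\<in>{1..m}. c j *\<^sub>R a j))"

definition Bset :: "(nat \<Rightarrow> real^'n) \<Rightarrow> nat \<Rightarrow> (real^'n) set" where
  "Bset a m = {x \<in> VZ a m. \<exists>c. (\<forall>j\<in>{1..m}. 0 \<le> c j \<and> c j < 1) \<and>
                                  x = (\<Sum>j\<in>{1..m}. c j *\<^sub>R a j)}"

definition interior_pt :: "(nat \<Rightarrow> real^'n) \<Rightarrow> nat \<Rightarrow> real^'n \<Rightarrow> bool" where
  "interior_pt a m x \<longleftrightarrow> (\<forall>r\<in>{1..m}. coord a m x r > 0)"

definition s0 :: "(nat \<Rightarrow> real^'n) \<Rightarrow> nat \<Rightarrow> (nat \<Rightarrow> nat) \<Rightarrow> real^'n \<Rightarrow> real^'n \<Rightarrow> nat" where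
  "s0 a m l bi bj = (THE s. s < l 0 \<and> bi + real s *\<^sub>R a 0 - bj \<in> ZA a m)"

text \<open>s_r^{(j)} (integer valued, stored as a real):
  b_i + s_0 a_0 = b_j - \<Sum>_r s_r a_r.\<close>
definition sr :: "(nat \<Rightarrow> real^'n) \<Rightarrow> nat \<Rightarrow> (nat \<Rightarrow> nat) \<Rightarrow> real^'n \<Rightarrow> real^'n \<Rightarrow> nat \<Rightarrow> real" where
  "sr a m l bi bj = coord a m (bj - bi - real (s0 a m l bi bj) *\<^sub>R a 0)"

definition Fc :: "(nat \<Rightarrow> real^'n) \<Rightarrow> nat \<Rightarrow> (nat \<Rightarrow> nat) \<Rightarrow> real^'n \<Rightarrow> real^'n \<Rightarrow> nat \<Rightarrow> real" where
  "Fc a m l bi bj s =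
     (\<Prod>r\<in>{1..m}. \<Prod>\<sigma><l r.
        pochhammer ((coord a m bj r - sr a m l bi bj r + real \<sigma>) / real (l r)) s)
     / (\<Prod>t\<in>{1..l 0}. pochhammer ((real (s0 a m l bi bj) + real t) / real (l 0)) s)"

text \<open>F^{(b_j)}_{b_i}(\<lambda>) = \<lambda>^{s_0} \<Sum>_s Fc s \<lambda>^{s l_0}, as a formal power series in \<lambda>.\<close>
definition Fser :: "(nat \<Rightarrow> real^'n) \<Rightarrow> nat \<Rightarrow> (nat \<Rightarrow> nat) \<Rightarrow> real^'n \<Rightarrow> real^'n \<Rightarrow> complex fps" where
  "Fser a m l bi bj = Abs_fps (\<lambda>n. let e = s0 a m l bi bj in
      if e \<le> n \<and> l 0 dvd (n - e) then complex_of_real (Fc a m l bi bj ((n - e) div l 0)) else 0)"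

text \<open>Generalised formal series x^e g(x) with g a formal power series are represented by
  pairs (e, g).  Coefficient of x^(e+s) of
  L = (\<delta>+\<beta>_1-1)...(\<delta>+\<beta>_N-1) - x (\<delta>+\<alpha>_1)...(\<delta>+\<alpha>_N) applied to x^e g(x).\<close>
definition hyp_apply :: "real multiset \<Rightarrow> real multiset \<Rightarrow> real \<Rightarrow> complex fps \<Rightarrow> nat \<Rightarrow> complex" where
  "hyp_apply bs as e g s =
     (\<Prod>\<beta>\<in>#bs. complex_of_real (e + real s + \<beta> - 1)) * fps_nth g s
     - (if s = 0 then 0
        else (\<Prod>\<alpha>\<in>#as. complex_of_real (e + real (s - 1) + \<alpha>)) * fps_nth g (s - 1))"

definition hyp_solution :: "real multiset \<Rightarrow> real multiset \<Rightarrow> real \<Rightarrow> complex fps \<Rightarrow> bool" where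
  "hyp_solution bs as e g \<longleftrightarrow> (\<forall>s. hyp_apply bs as e g s = 0)"

definition gser_coeff :: "real \<Rightarrow> complex fps \<Rightarrow> real \<Rightarrow> complex" where
  "gser_coeff e g t = (if t - e \<in> \<nat> then fps_nth g (nat \<lfloor>t - e\<rfloor>) else 0)"

definition full_solution_set ::
  "real multiset \<Rightarrow> real multiset \<Rightarrow> 'i set \<Rightarrow> ('i \<Rightarrow> real) \<Rightarrow> ('i \<Rightarrow> complex fps) \<Rightarrow> bool" where
  "full_solution_set bs as J e g \<longleftrightarrow>
     finite J \<and> card J = size bs \<and>
     (\<forall>j\<in>J. hyp_solution bs as (e j) (g j)) \<and>
     (\<forall>c :: 'i \<Rightarrow> complex. (\<forall>t. (\<Sum>j\<in>J. c j * gser_coeff (e j) (g j) t) = 0)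
                             \<longrightarrow> (\<forall>j\<in>J. c j = 0))"

end

theory Submission
  imports Defs
begin


locale L6 =
  fixes a :: "nat \<Rightarrow> real^'n" and m :: nat and l :: "nat \<Rightarrow> nat"
    and C :: "(real^'n) set" and bi :: "real^'n"
  assumes A_int: "\<forall>j\<in>{0..m}. intvec (a j)"
    and A_inj: "inj_on a {1..m}"
    and A_indep: "independent (a ` {1..m})"
    and l_pos: "\<forall>j\<in>{0..m}. l j > 0"
    and l_gcd: "Gcd (l ` {0..m}) = 1"
    and rel: "real (l 0) *\<^sub>R a 0 = (\<Sum>j\<in>{1..m}. real (l j) *\<^sub>R a j)"
    and l0_sum: "l 0 = (\<Sum>j\<in>{1..m}. l j)"
    and coset: "\<exists>x\<in>VZ a m. C = (\<lambda>z. x + z) ` ZAplus a m"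
    and bi_in: "bi \<in> Bset a m \<inter> C"
    and bi_bdry: "\<not> interior_pt a m bi"
begin

lemma coeff_unique:
  assumes "(\<Sum>j\<in>{1..m}. c j *\<^sub>R a j) = (\<Sum>j\<in>{1..m}. d j *\<^sub>R a j)" "r \<in> {1..m}"
  shows "c r = d r"
proof -
  define u where "u v = (c (inv_into {1..m} a v) - d (inv_into {1..m} a v))" for v
  have "(\<Sum>v\<in>a ` {1..m}. u v *\<^sub>R v) = (\<Sum>j\<in>{1..m}. u (a j) *\<^sub>R a j)"
    by (rule sum.reindex[OF A_inj, unfolded comp_def])
  also have "\<dots> = (\<Sum>j\<in>{1..m}. (c j - d j) *\<^sub>R a j)"
  proof (rule sum.cong)
    fix j assume j: "j \<in> {1..m}"
    have "inv_into {1..m} a (a j) = j" by (rule inv_into_f_f[OF A_inj j])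
    thus "u (a j) *\<^sub>R a j = (c j - d j) *\<^sub>R a j" by (simp add: u_def)
  qed simp
  also have "\<dots> = 0" using assms(1) by (simp add: scaleR_diff_left sum_subtractf)
  finally have "(\<Sum>v\<in>a ` {1..m}. u v *\<^sub>R v) = 0" .
  hence "\<forall>v\<in>a ` {1..m}. u v = 0" using A_indep dependent_finite[of "a ` {1..m}"]
    by (auto simp: scalar_mult_eq_scaleR)
  hence "u (a r) = 0" using assms(2) by auto
  moreover have "inv_into {1..m} a (a r) = r" by (rule inv_into_f_f[OF A_inj assms(2)])
  ultimately show ?thesis by (simp add: u_def)
qed

lemma coord_eq:
  assumes "x = (\<Sum>j\<in>{1..m}. c j *\<^sub>R a j)" "r \<in> {1..m}"
  shows "coord a m x r = c r"
proof -
  define c' where "c' j = (if j \<in> {1..m} then c j else 0)" for j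
  have x': "x = (\<Sum>j\<in>{1..m}. c' j *\<^sub>R a j)" unfolding assms(1) c'_def by (rule sum.cong) auto
  have "coord a m x = c'"
    unfolding coord_def
  proof (rule the_equality)
    show "(\<forall>j. j \<notin> {1..m} \<longrightarrow> c' j = 0) \<and> x = (\<Sum>j\<in>{1..m}. c' j *\<^sub>R a j)"
      using x' by (auto simp: c'_def)
  next
    fix e assume e: "(\<forall>j. j \<notin> {1..m} \<longrightarrow> e j = 0) \<and> x = (\<Sum>j\<in>{1..m}. e j *\<^sub>R a j)"
    show "e = c'"
    proof
      fix j show "e j = c' j"
      proof (cases "j \<in> {1..m}")
        case True thus ?thesis using coeff_unique[of e c' j] e x' by auto
      next
        case False thus ?thesis using e by (auto simp: c'_def)
      qed
    qed
  qed
  thus ?thesis using assms(2) by (simp add: c'_def)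
qed

lemma span_repr:
  assumes "x \<in> span (a ` {1..m})"
  shows "\<exists>c. x = (\<Sum>j\<in>{1..m}. c j *\<^sub>R a j)"
proof -
  obtain u where "x = (\<Sum>v\<in>a ` {1..m}. u v *\<^sub>R v)"
    using assms span_finite[of "a ` {1..m}"] by (auto simp: scalar_mult_eq_scaleR)
  also have "\<dots> = (\<Sum>j\<in>{1..m}. u (a j) *\<^sub>R a j)"
    by (rule sum.reindex[OF A_inj, unfolded comp_def])
  finally have "x = (\<Sum>j\<in>{1..m}. u (a j) *\<^sub>R a j)" .
  thus ?thesis by (rule exI[where x="\<lambda>j. u (a j)"])
qed

lemma repr_span: "(\<Sum>j\<in>{1..m}. c j *\<^sub>R a j) \<in> span (a ` {1..m})"
  by (intro span_sum span_scale span_base) auto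

lemma coord_repr:
  assumes "x \<in> span (a ` {1..m})"
  shows "x = (\<Sum>j\<in>{1..m}. coord a m x j *\<^sub>R a j)"
proof -
  obtain c where c: "x = (\<Sum>j\<in>{1..m}. c j *\<^sub>R a j)" using span_repr[OF assms] by blast
  have "(\<Sum>j\<in>{1..m}. coord a m x j *\<^sub>R a j) = (\<Sum>j\<in>{1..m}. c j *\<^sub>R a j)"
    by (rule sum.cong) (auto simp: coord_eq[OF c])
  thus ?thesis using c by metis
qed

lemma coord_add:
  assumes "x \<in> span (a ` {1..m})" "y \<in> span (a ` {1..m})" "r \<in> {1..m}"
  shows "coord a m (x + y) r = coord a m x r + coord a m y r"
proof -
  obtain c d where c: "x = (\<Sum>j\<in>{1..m}. c j *\<^sub>R a j)" and d: "y = (\<Sum>j\<in>{1..m}. d j *\<^sub>R a j)"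
    using span_repr assms by meson
  have "x + y = (\<Sum>j\<in>{1..m}. (c j + d j) *\<^sub>R a j)"
    unfolding c d by (simp add: scaleR_add_left sum.distrib)
  thus ?thesis using coord_eq[OF _ assms(3)] c d by metis
qed

lemma coord_diff:
  assumes "x \<in> span (a ` {1..m})" "y \<in> span (a ` {1..m})" "r \<in> {1..m}"
  shows "coord a m (x - y) r = coord a m x r - coord a m y r"
proof -
  obtain c d where c: "x = (\<Sum>j\<in>{1..m}. c j *\<^sub>R a j)" and d: "y = (\<Sum>j\<in>{1..m}. d j *\<^sub>R a j)"
    using span_repr assms by meson
  have "x - y = (\<Sum>j\<in>{1..m}. (c j - d j) *\<^sub>R a j)"
    unfolding c d by (simp add: scaleR_diff_left sum_subtractf)
  thus ?thesis using coord_eq[OF _ assms(3)] c d by metis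
qed

lemma coord_scale:
  assumes "x \<in> span (a ` {1..m})" "r \<in> {1..m}"
  shows "coord a m (t *\<^sub>R x) r = t * coord a m x r"
proof -
  obtain c where c: "x = (\<Sum>j\<in>{1..m}. c j *\<^sub>R a j)"
    using span_repr assms by meson
  have "t *\<^sub>R x = (\<Sum>j\<in>{1..m}. (t * c j) *\<^sub>R a j)"
    unfolding c by (simp add: scaleR_sum_right)
  thus ?thesis using coord_eq[OF _ assms(2)] c by metis
qed

lemma l0_pos: "l 0 > 0" using l_pos by auto

lemma a0_repr: "a 0 = (\<Sum>j\<in>{1..m}. (real (l j) / real (l 0)) *\<^sub>R a j)"
proof -
  have "a 0 = (1 / real (l 0)) *\<^sub>R (real (l 0) *\<^sub>R a 0)" using l0_pos by simp
  also have "\<dots> = (\<Sum>j\<in>{1..m}. (real (l j) / real (l 0)) *\<^sub>R a j)"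
    unfolding rel by (simp add: scaleR_sum_right)
  finally show ?thesis .
qed

lemma a0_span: "a 0 \<in> span (a ` {1..m})" using a0_repr repr_span by metis

lemma coord_a0: "r \<in> {1..m} \<Longrightarrow> coord a m (a 0) r = real (l r) / real (l 0)"
  using coord_eq[OF a0_repr] .

end



lemma intvec_add: "intvec x \<Longrightarrow> intvec y \<Longrightarrow> intvec (x + y)"
  by (auto simp: intvec_def)
lemma intvec_diff: "intvec x \<Longrightarrow> intvec y \<Longrightarrow> intvec (x - y)"
  by (auto simp: intvec_def)
lemma intvec_scale: "intvec x \<Longrightarrow> intvec (of_int k *\<^sub>R x)"
  by (auto simp: intvec_def)
lemma intvec_scale_nat: "intvec x \<Longrightarrow> intvec (real k *\<^sub>R x)"
  using intvec_scale[of x "int k"] by simp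
lemma intvec_sum: "(\<And>j. j \<in> S \<Longrightarrow> intvec (f j)) \<Longrightarrow> intvec (\<Sum>j\<in>S. f j)"
  by (induction S rule: infinite_finite_induct) (auto simp: intvec_def)

lemma sum_split0: "(\<Sum>j\<in>{0..(m::nat)}. f j) = f 0 + (\<Sum>j\<in>{1..m}. (f j :: 'a::comm_monoid_add))"
  using sum.atLeast_Suc_atMost[of 0 m f] by simp

lemma Ints_small: "(x::real) \<in> \<int> \<Longrightarrow> \<bar>x\<bar> < 1 \<Longrightarrow> x = 0"
proof -
  assume x: "x \<in> \<int>" and lt: "\<bar>x\<bar> < 1"
  obtain k where k: "x = of_int k" using x Ints_cases by blast
  have "\<bar>of_int k :: real\<bar> < 1" using lt k by simp
  hence "\<bar>k\<bar> < 1" by (simp only: of_int_abs[symmetric] of_int_less_1_iff)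
  thus "x = 0" using k by simp
qed

context L6 begin

abbreviation "VV \<equiv> span (a ` {1..m})"

lemma ZA_repr: "z \<in> ZA a m \<longleftrightarrow> (\<exists>c. z = (\<Sum>j\<in>{1..m}. of_int (c j) *\<^sub>R a j))"
  by (auto simp: ZA_def)

lemma ZA_coord:
  assumes "z \<in> ZA a m"
  shows "z \<in> VV" "\<And>r. r \<in> {1..m} \<Longrightarrow> coord a m z r \<in> \<int>"
proof -
  obtain c where c: "z = (\<Sum>j\<in>{1..m}. of_int (c j) *\<^sub>R a j)" using assms ZA_repr by blast
  show "z \<in> VV" using c repr_span by metis
  show "coord a m z r \<in> \<int>" if "r \<in> {1..m}" for r using coord_eq[OF c that] by simp
qed

lemma ZA_of_coord:
  assumes "x \<in> VV" "\<forall>r\<in>{1..m}. coord a m x r \<in> \<int>"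
  shows "x \<in> ZA a m"
proof -
  have "x = (\<Sum>j\<in>{1..m}. coord a m x j *\<^sub>R a j)" using coord_repr[OF assms(1)] .
  also have "\<dots> = (\<Sum>j\<in>{1..m}. of_int \<lfloor>coord a m x j\<rfloor> *\<^sub>R a j)"
    by (rule sum.cong) (use assms(2) in auto)
  finally show ?thesis unfolding ZA_repr by (rule exI[where x="\<lambda>j. \<lfloor>coord a m x j\<rfloor>"])
qed

lemma ZA_iff: "x \<in> VV \<Longrightarrow> x \<in> ZA a m \<longleftrightarrow> (\<forall>r\<in>{1..m}. coord a m x r \<in> \<int>)"
  using ZA_coord ZA_of_coord by blast

lemma a_intvec: "j \<in> {0..m} \<Longrightarrow> intvec (a j)" using A_int by blast

lemma Bset_iff: "x \<in> Bset a m \<longleftrightarrow> x \<in> VV \<and> intvec x \<and> (\<forall>r\<in>{1..m}. 0 \<le> coord a m x r \<and> coord a m x r < 1)"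
proof
  assume x: "x \<in> Bset a m"
  then obtain c where c: "\<forall>j\<in>{1..m}. 0 \<le> c j \<and> c j < 1" "x = (\<Sum>j\<in>{1..m}. c j *\<^sub>R a j)"
    by (auto simp: Bset_def)
  show "x \<in> VV \<and> intvec x \<and> (\<forall>r\<in>{1..m}. 0 \<le> coord a m x r \<and> coord a m x r < 1)"
    using x c coord_eq[OF c(2)] by (auto simp: Bset_def VZ_def)
next
  assume x: "x \<in> VV \<and> intvec x \<and> (\<forall>r\<in>{1..m}. 0 \<le> coord a m x r \<and> coord a m x r < 1)"
  thus "x \<in> Bset a m" unfolding Bset_def VZ_def using coord_repr[of x] by blast
qed

lemma ZAplus_repr:
  assumes "z \<in> ZAplus a m"
  obtains c where "z = of_int (c 0) *\<^sub>R a 0 + (\<Sum>j\<in>{1..m}. of_int (c j) *\<^sub>R a j)"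
proof -
  obtain c where c: "z = (\<Sum>j\<in>{0..m}. of_int (c j) *\<^sub>R a j)" using assms by (auto simp: ZAplus_def)
  have "z = of_int (c 0) *\<^sub>R a 0 + (\<Sum>j\<in>{1..m}. of_int (c j) *\<^sub>R a j)"
    unfolding c by (rule sum_split0)
  thus ?thesis using that by blast
qed

lemma ZAplus_intro:
  "of_int c0 *\<^sub>R a 0 + (\<Sum>j\<in>{1..m}. of_int (c j) *\<^sub>R a j) \<in> ZAplus a m"
proof -
  have "(\<Sum>j\<in>{1..m}. of_int ((c(0:=c0)) j) *\<^sub>R a j) = (\<Sum>j\<in>{1..m}. of_int (c j) *\<^sub>R a j)"
    by (rule sum.cong) auto
  hence "(\<Sum>j\<in>{0..m}. of_int ((c(0:=c0)) j) *\<^sub>R a j) = of_int c0 *\<^sub>R a 0 + (\<Sum>j\<in>{1..m}. of_int (c j) *\<^sub>R a j)"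
    unfolding sum_split0 by simp
  thus ?thesis unfolding ZAplus_def by (intro CollectI exI[where x="c(0:=c0)"]) simp
qed

lemma span_a0_comb: "x \<in> VV \<Longrightarrow> y \<in> VV \<Longrightarrow> x + t *\<^sub>R a 0 - y \<in> VV"
  using a0_span by (intro span_add span_diff span_scale) auto

lemma coord_comb:
  assumes "x \<in> VV" "y \<in> VV" "r \<in> {1..m}"
  shows "coord a m (x + t *\<^sub>R a 0 - y) r = coord a m x r + t * (real (l r) / real (l 0)) - coord a m y r"
proof -
  have "t *\<^sub>R a 0 \<in> VV" using a0_span by (intro span_scale)
  moreover have "x + t *\<^sub>R a 0 \<in> VV" using a0_span assms by (intro span_add span_scale)
  ultimately show ?thesis using assms coord_diff coord_add coord_scale coord_a0 a0_span by simp
qed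

lemma l0_dvd:
  assumes "s < l 0" "s' < l 0" "\<forall>r\<in>{1..m}. (real s - real s') * (real (l r) / real (l 0)) \<in> \<int>"
  shows "s = s'"
proof -
  define d where "d = nat \<bar>int s - int s'\<bar>"
  have dv: "l 0 dvd d * l j" if "j \<in> {0..m}" for j
  proof (cases "j = 0")
    case True thus ?thesis by simp
  next
    case False
    hence j: "j \<in> {1..m}" using that by auto
    obtain k where k: "(real s - real s') * (real (l j) / real (l 0)) = of_int k"
      using assms(3) j Ints_cases by metis
    hence "(real s - real s') * real (l j) = of_int k * real (l 0)" using l0_pos by (simp add: field_simps)
    hence "of_int ((int s - int s') * int (l j)) = (of_int (k * int (l 0)) :: real)" by simp
    hence "(int s - int s') * int (l j) = k * int (l 0)" by (simp only: of_int_eq_iff)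
    hence "int (l 0) dvd (int s - int s') * int (l j)" by simp
    moreover have "\<bar>int s - int s'\<bar> * int (l j) = \<bar>(int s - int s') * int (l j)\<bar>" by (simp add: abs_mult)
    ultimately have "int (l 0) dvd \<bar>int s - int s'\<bar> * int (l j)" by (simp only: dvd_abs_iff)
    hence "int (l 0) dvd int (d * l j)" by (simp add: d_def)
    thus ?thesis by (simp only: int_dvd_int_iff)
  qed
  have "l 0 dvd Gcd ((*) d ` (l ` {0..m}))" by (rule Gcd_greatest) (use dv in auto)
  also have "Gcd ((*) d ` (l ` {0..m})) = d" using l_gcd by (simp add: Gcd_mult)
  finally have "l 0 dvd d" .
  moreover have "d < l 0" using assms(1,2) by (simp add: d_def)
  ultimately have "d = 0" using nat_dvd_not_less by blast
  thus ?thesis by (simp add: d_def)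
qed

definition "Bk = Bset a m \<inter> C"
definition "P b s \<longleftrightarrow> s < l 0 \<and> bi + real s *\<^sub>R a 0 - b \<in> ZA a m"

lemma Bk_V: "b \<in> Bk \<Longrightarrow> b \<in> VV" by (auto simp: Bk_def Bset_iff)
lemma bi_Bk: "bi \<in> Bk" using bi_in by (simp add: Bk_def)
lemma bi_V: "bi \<in> VV" using Bk_V bi_Bk by blast

lemma P_coord:
  assumes "b \<in> VV"
  shows "P b s \<longleftrightarrow> s < l 0 \<and> (\<forall>r\<in>{1..m}. coord a m bi r + real s * (real (l r) / real (l 0)) - coord a m b r \<in> \<int>)"
  unfolding P_def using ZA_iff[OF span_a0_comb[OF bi_V assms]] coord_comb[OF bi_V assms] by simp

lemma P_uniq:
  assumes "b \<in> VV" "P b s" "P b s'"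
  shows "s = s'"
proof (rule l0_dvd)
  show "s < l 0" "s' < l 0" using assms P_def by auto
  show "\<forall>r\<in>{1..m}. (real s - real s') * (real (l r) / real (l 0)) \<in> \<int>"
  proof
    fix r assume r: "r \<in> {1..m}"
    have "coord a m bi r + real s * (real (l r) / real (l 0)) - coord a m b r
        - (coord a m bi r + real s' * (real (l r) / real (l 0)) - coord a m b r) \<in> \<int>"
    proof (rule Ints_diff)
      show "coord a m bi r + real s * (real (l r) / real (l 0)) - coord a m b r \<in> \<int>"
        using assms(1,2) r P_coord by blast
      show "coord a m bi r + real s' * (real (l r) / real (l 0)) - coord a m b r \<in> \<int>"
        using assms(1,3) r P_coord by blast
    qed
    moreover have "coord a m bi r + real s * (real (l r) / real (l 0)) - coord a m b r
        - (coord a m bi r + real s' * (real (l r) / real (l 0)) - coord a m b r) =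
        (real s - real s') * (real (l r) / real (l 0))" using l0_pos by (simp add: field_simps)
    ultimately show "(real s - real s') * (real (l r) / real (l 0)) \<in> \<int>" by simp
  qed
qed

lemma coset_obtain: obtains x0 where "C = (\<lambda>z. x0 + z) ` ZAplus a m"
  using coset by blast

lemma P_exists:
  assumes "b \<in> Bk"
  shows "\<exists>s. P b s"
proof -
  obtain x0 where C: "C = (\<lambda>z. x0 + z) ` ZAplus a m" using coset_obtain by blast
  have "b \<in> C" "bi \<in> C" using assms bi_Bk by (auto simp: Bk_def)
  then obtain z1 z2 where z1: "z1 \<in> ZAplus a m" "b = x0 + z1"
    and z2: "z2 \<in> ZAplus a m" "bi = x0 + z2" unfolding C by blast
  obtain c1 where c1: "z1 = of_int (c1 0) *\<^sub>R a 0 + (\<Sum>j\<in>{1..m}. of_int (c1 j) *\<^sub>R a j)"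
    using ZAplus_repr[OF z1(1)] by blast
  obtain c2 where c2: "z2 = of_int (c2 0) *\<^sub>R a 0 + (\<Sum>j\<in>{1..m}. of_int (c2 j) *\<^sub>R a j)"
    using ZAplus_repr[OF z2(1)] by blast
  define d0 where "d0 = c2 0 - c1 0"
  define s where "s = nat ((- d0) mod int (l 0))"
  have s_lt: "s < l 0" using l0_pos by (simp add: s_def nat_less_iff)
  have sd0: "int s = (- d0) mod int (l 0)" using l0_pos by (simp add: s_def)
  have md: "(d0 + int s) mod int (l 0) = 0" unfolding sd0 by (simp add: mod_add_right_eq)
  define q where "q = (d0 + int s) div int (l 0)"
  have sd: "d0 + int s = int (l 0) * q"
    using mult_div_mod_eq[of "int (l 0)" "d0 + int s"] md by (simp add: q_def)
  have e1: "(\<Sum>j\<in>{1..m}. of_int (c2 j - c1 j) *\<^sub>R a j) =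
      (\<Sum>j\<in>{1..m}. of_int (c2 j) *\<^sub>R a j) - (\<Sum>j\<in>{1..m}. of_int (c1 j) *\<^sub>R a j)"
    by (simp add: scaleR_diff_left sum_subtractf)
  have e2: "of_int (d0 + int s) *\<^sub>R a 0 = of_int (c2 0) *\<^sub>R a 0 - of_int (c1 0) *\<^sub>R a 0 + real s *\<^sub>R a 0"
    by (simp add: d0_def scaleR_diff_left scaleR_add_left)
  have e3: "of_int (d0 + int s) *\<^sub>R a 0 = (\<Sum>j\<in>{1..m}. of_int (q * l j) *\<^sub>R a j)"
  proof -
    have "of_int (d0 + int s) *\<^sub>R a 0 = (of_int q) *\<^sub>R (real (l 0) *\<^sub>R a 0)"
      unfolding sd by simp
    also have "\<dots> = (\<Sum>j\<in>{1..m}. of_int (q * l j) *\<^sub>R a j)"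
      unfolding rel by (simp add: scaleR_sum_right)
    finally show ?thesis .
  qed
  have e4: "(\<Sum>j\<in>{1..m}. of_int (q * l j + (c2 j - c1 j)) *\<^sub>R a j) =
     (\<Sum>j\<in>{1..m}. of_int (q * l j) *\<^sub>R a j) + (\<Sum>j\<in>{1..m}. of_int (c2 j - c1 j) *\<^sub>R a j)"
    by (simp only: of_int_add scaleR_add_left sum.distrib)
  have "bi + real s *\<^sub>R a 0 - b = z2 - z1 + real s *\<^sub>R a 0" using z1 z2 by simp
  also have "\<dots> = of_int (d0 + int s) *\<^sub>R a 0 + (\<Sum>j\<in>{1..m}. of_int (c2 j - c1 j) *\<^sub>R a j)"
    unfolding e1 e2 c1 c2 by simp
  also have "\<dots> = (\<Sum>j\<in>{1..m}. of_int (q * l j + (c2 j - c1 j)) *\<^sub>R a j)"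
    unfolding e3 e4 ..
  finally have "bi + real s *\<^sub>R a 0 - b \<in> ZA a m" unfolding ZA_repr
    by (rule exI[where x="\<lambda>j. q * l j + (c2 j - c1 j)"])
  thus ?thesis using s_lt P_def by blast
qed

lemma s0_P: "b \<in> Bk \<Longrightarrow> P b (s0 a m l bi b)"
proof -
  assume b: "b \<in> Bk"
  have "\<exists>!s. P b s" using P_exists[OF b] P_uniq[OF Bk_V[OF b]] by blast
  hence "P b (THE s. P b s)" by (rule theI')
  thus ?thesis unfolding s0_def P_def .
qed

lemma s0_eq: "b \<in> Bk \<Longrightarrow> P b s \<Longrightarrow> s0 a m l bi b = s"
  using s0_P P_uniq Bk_V by blast

lemma s0_bi: "s0 a m l bi bi = 0"
proof (rule s0_eq[OF bi_Bk])
  have "bi + real 0 *\<^sub>R a 0 - bi = (\<Sum>j\<in>{1..m}. of_int ((\<lambda>_. 0::int) j) *\<^sub>R a j)" by simp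
  hence "bi + real 0 *\<^sub>R a 0 - bi \<in> ZA a m" unfolding ZA_repr by (rule exI[where x="\<lambda>_. 0"])
  thus "P bi 0" using l0_pos by (simp add: P_def)
qed

end


context L6 begin

abbreviation "S0 \<equiv> s0 a m l bi"

lemma s0_lt: "b \<in> Bk \<Longrightarrow> S0 b < l 0" using s0_P P_def by blast

lemma s0_coord: "b \<in> Bk \<Longrightarrow> r \<in> {1..m} \<Longrightarrow>
   coord a m bi r + real (S0 b) * (real (l r) / real (l 0)) - coord a m b r \<in> \<int>"
  using s0_P P_coord Bk_V by blast

lemma Bk_coord: "b \<in> Bk \<Longrightarrow> r \<in> {1..m} \<Longrightarrow> 0 \<le> coord a m b r \<and> coord a m b r < 1"
  by (auto simp: Bk_def Bset_iff)

lemma s0_inj: "inj_on S0 Bk"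
proof (rule inj_onI)
  fix b b' assume b: "b \<in> Bk" and b': "b' \<in> Bk" and eq: "S0 b = S0 b'"
  have cr: "coord a m b r = coord a m b' r" if r: "r \<in> {1..m}" for r
  proof -
    have h1: "coord a m bi r + real (S0 b) * (real (l r) / real (l 0)) - coord a m b r \<in> \<int>"
      using s0_coord[OF b r] .
    have h2: "coord a m bi r + real (S0 b) * (real (l r) / real (l 0)) - coord a m b' r \<in> \<int>"
      using s0_coord[OF b' r] eq by simp
    have "coord a m bi r + real (S0 b) * (real (l r) / real (l 0)) - coord a m b' r
       - (coord a m bi r + real (S0 b) * (real (l r) / real (l 0)) - coord a m b r) \<in> \<int>"
      by (rule Ints_diff[OF h2 h1])
    hence "coord a m b r - coord a m b' r \<in> \<int>" by simp
    moreover have "\<bar>coord a m b r - coord a m b' r\<bar> < 1" using Bk_coord[OF b r] Bk_coord[OF b' r] by linarith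
    ultimately show ?thesis using Ints_small by fastforce
  qed
  have "b = (\<Sum>j\<in>{1..m}. coord a m b j *\<^sub>R a j)" using coord_repr Bk_V b by blast
  also have "\<dots> = (\<Sum>j\<in>{1..m}. coord a m b' j *\<^sub>R a j)" by (rule sum.cong) (use cr in auto)
  also have "\<dots> = b'" using coord_repr Bk_V b' by metis
  finally show "b = b'" .
qed

lemma bi_intvec: "intvec bi" using bi_Bk by (auto simp: Bk_def Bset_iff)

lemma s0_surj:
  assumes s: "s < l 0"
  shows "\<exists>b\<in>Bk. S0 b = s"
proof -
  define y where "y = bi + real s *\<^sub>R a 0"
  have yV: "y \<in> VV" unfolding y_def using bi_V a0_span by (intro span_add span_scale)
  define w where "w = (\<Sum>j\<in>{1..m}. of_int \<lfloor>coord a m y j\<rfloor> *\<^sub>R a j)"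
  define b where "b = y - w"
  have b_repr: "b = (\<Sum>j\<in>{1..m}. frac (coord a m y j) *\<^sub>R a j)"
  proof -
    have "b = (\<Sum>j\<in>{1..m}. coord a m y j *\<^sub>R a j) - w" unfolding b_def using coord_repr[OF yV] by metis
    also have "\<dots> = (\<Sum>j\<in>{1..m}. frac (coord a m y j) *\<^sub>R a j)"
      unfolding w_def frac_def by (simp add: scaleR_diff_left sum_subtractf)
    finally show ?thesis .
  qed
  have bV: "b \<in> VV" using b_repr repr_span by metis
  have y_int: "intvec y" unfolding y_def using bi_intvec a_intvec[of 0]
    by (intro intvec_add intvec_scale_nat) auto
  have w_int: "intvec w" unfolding w_def by (intro intvec_sum intvec_scale a_intvec) auto
  have b_int: "intvec b" unfolding b_def using y_int w_int by (rule intvec_diff)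
  have bB: "b \<in> Bset a m"
    unfolding Bset_iff using bV b_int coord_eq[OF b_repr] frac_lt_1 frac_ge_0 by auto
  obtain x0 where C: "C = (\<lambda>z. x0 + z) ` ZAplus a m" using coset_obtain by blast
  have "bi \<in> C" using bi_Bk by (auto simp: Bk_def)
  then obtain z2 where z2: "z2 \<in> ZAplus a m" "bi = x0 + z2" unfolding C by blast
  obtain c2 where c2: "z2 = of_int (c2 0) *\<^sub>R a 0 + (\<Sum>j\<in>{1..m}. of_int (c2 j) *\<^sub>R a j)"
    using ZAplus_repr[OF z2(1)] by blast
  have e1: "(\<Sum>j\<in>{1..m}. of_int (c2 j - \<lfloor>coord a m y j\<rfloor>) *\<^sub>R a j) =
     (\<Sum>j\<in>{1..m}. of_int (c2 j) *\<^sub>R a j) - w"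
    unfolding w_def by (simp add: scaleR_diff_left sum_subtractf)
  have e2: "of_int (c2 0 + int s) *\<^sub>R a 0 = of_int (c2 0) *\<^sub>R a 0 + real s *\<^sub>R a 0"
    by (simp add: scaleR_add_left)
  have "x0 + (of_int (c2 0 + int s) *\<^sub>R a 0 + (\<Sum>j\<in>{1..m}. of_int (c2 j - \<lfloor>coord a m y j\<rfloor>) *\<^sub>R a j))
     = x0 + (of_int (c2 0) *\<^sub>R a 0 + real s *\<^sub>R a 0 + ((\<Sum>j\<in>{1..m}. of_int (c2 j) *\<^sub>R a j) - w))"
    by (simp only: e1 e2)
  also have "\<dots> = bi + real s *\<^sub>R a 0 - w" unfolding z2(2) c2 by (simp add: algebra_simps)
  also have "\<dots> = b" by (simp add: b_def y_def)
  finally have "b = x0 + (of_int (c2 0 + int s) *\<^sub>R a 0 + (\<Sum>j\<in>{1..m}. of_int (c2 j - \<lfloor>coord a m y j\<rfloor>) *\<^sub>R a j))" by simp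
  moreover have "of_int (c2 0 + int s) *\<^sub>R a 0 + (\<Sum>j\<in>{1..m}. of_int (c2 j - \<lfloor>coord a m y j\<rfloor>) *\<^sub>R a j) \<in> ZAplus a m"
    by (rule ZAplus_intro)
  ultimately have "b \<in> (\<lambda>z. x0 + z) ` ZAplus a m" by (rule image_eqI)
  hence "b \<in> C" using C by simp
  hence bBk: "b \<in> Bk" using bB by (simp add: Bk_def)
  have "bi + real s *\<^sub>R a 0 - b = (\<Sum>j\<in>{1..m}. of_int \<lfloor>coord a m y j\<rfloor> *\<^sub>R a j)"
    unfolding b_def y_def w_def by simp
  hence "bi + real s *\<^sub>R a 0 - b \<in> ZA a m" unfolding ZA_repr
    by (rule exI[where x="\<lambda>j. \<lfloor>coord a m y j\<rfloor>"])
  hence "P b s" using s by (simp add: P_def)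
  thus ?thesis using s0_eq[OF bBk] bBk by blast
qed

lemma s0_bij: "bij_betw S0 Bk {0..<l 0}"
  unfolding bij_betw_def using s0_inj s0_lt s0_surj by fastforce

lemma Bk_finite: "finite Bk" using bij_betw_finite[OF s0_bij] by simp

lemma Bk_card: "card Bk = l 0" using bij_betw_same_card[OF s0_bij] by simp

lemma sr_shift:
  assumes b: "b \<in> Bk" and r: "r \<in> {1..m}"
  shows "coord a m b r - sr a m l bi b r = coord a m bi r + real (S0 b) * (real (l r) / real (l 0))"
proof -
  have bV: "b \<in> VV" using Bk_V b .
  have t: "real (S0 b) *\<^sub>R a 0 \<in> VV" using a0_span by (intro span_scale)
  have "b - bi \<in> VV" using bV bi_V by (intro span_diff)
  hence "coord a m (b - bi - real (S0 b) *\<^sub>R a 0) r = coord a m (b - bi) r - coord a m (real (S0 b) *\<^sub>R a 0) r"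
    using coord_diff t r by blast
  also have "\<dots> = coord a m b r - coord a m bi r - real (S0 b) * (real (l r) / real (l 0))"
    using coord_diff[OF bV bi_V r] coord_scale[OF a0_span r] coord_a0[OF r] by simp
  finally show ?thesis unfolding sr_def by simp
qed

end



lemma of_real_prod_mset: "of_real (prod_mset (image_mset f M)) = prod_mset (image_mset (\<lambda>x. (of_real (f x) :: complex)) M)"
  by (induction M) simp_all

lemma pm_sum: "finite I \<Longrightarrow> prod_mset (image_mset g (\<Sum>r\<in>I. M r)) = (\<Prod>r\<in>I. prod_mset (image_mset g (M r)))"
  by (induction I rule: finite_induct) simp_all

lemma size_sum_set: "finite I \<Longrightarrow> size (\<Sum>r\<in>I. (M r :: 'a multiset)) = (\<Sum>r\<in>I. size (M r))"
  by (induction I rule: finite_induct) simp_all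

lemma in_sum_set: "finite I \<Longrightarrow> r \<in> I \<Longrightarrow> x \<in># M r \<Longrightarrow> x \<in># (\<Sum>r\<in>I. (M r :: 'a multiset))"
  by (induction I rule: finite_induct) auto

lemma pm_list: "prod_mset (image_mset g (image_mset f (mset [0..<n]))) = (\<Prod>\<sigma><n. g (f \<sigma>))"
proof -
  have "(\<Prod>\<sigma><n. g (f \<sigma>)) = (\<Prod>\<sigma>\<in>{0..<n}. g (f \<sigma>))" by (simp add: atLeast0LessThan)
  also have "\<dots> = prod_mset (image_mset (\<lambda>\<sigma>. g (f \<sigma>)) (mset_set {0..<n}))" by (rule prod_unfold_prod_mset)
  finally show ?thesis by (simp add: image_mset.compositionality comp_def)
qed

lemma pm_mult: "prod_mset (image_mset (\<lambda>x. f x * g x) M) = prod_mset (image_mset f M) * prod_mset (image_mset (g :: _ \<Rightarrow> 'b::comm_monoid_mult) M)"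
  by (induction M) (simp_all add: ac_simps)

lemma recur:
  fixes e :: real and al :: "real multiset" and E K :: "real set"
  assumes fin: "finite E" "finite K" and disj: "E \<inter> K = {}" and sub: "mset_set E \<subseteq># al"
    and pos: "\<forall>x\<in>E \<union> K. x > 0" and e: "e \<ge> 0"
  defines "F \<equiv> \<lambda>s. prod_mset (image_mset (\<lambda>\<alpha>. pochhammer (\<alpha> + e) s) al) / (\<Prod>x\<in>K \<union> E. pochhammer (e + x) s)"
  shows "(\<Prod>\<beta>\<in>K. e + real (Suc s) + \<beta> - 1) * F (Suc s) =
         prod_mset (image_mset (\<lambda>\<alpha>. e + real s + \<alpha>) (al - mset_set E)) * F s"
proof -
  define G where "G s = prod_mset (image_mset (\<lambda>\<alpha>. pochhammer (\<alpha> + e) s) al)" for s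
  define Dn where "Dn s = (\<Prod>x\<in>K \<union> E. pochhammer (e + x) s)" for s
  define A where "A = prod_mset (image_mset (\<lambda>\<alpha>. e + real s + \<alpha>) (al - mset_set E))"
  define U where "U = (\<Prod>x\<in>E. e + real s + x)"
  define B where "B = (\<Prod>x\<in>K. e + real s + x)"
  have al: "al = (al - mset_set E) + mset_set E" using sub by simp
  have G1: "G (Suc s) = G s * prod_mset (image_mset (\<lambda>\<alpha>. e + real s + \<alpha>) al)"
    unfolding G_def by (simp add: pochhammer_Suc pm_mult add_ac)
  have G2: "prod_mset (image_mset (\<lambda>\<alpha>. e + real s + \<alpha>) al) = A * U"
  proof -
    have "prod_mset (image_mset (\<lambda>\<alpha>. e + real s + \<alpha>) al) =
       prod_mset (image_mset (\<lambda>\<alpha>. e + real s + \<alpha>) ((al - mset_set E) + mset_set E))"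
      using al by simp
    also have "\<dots> = A * U" unfolding A_def U_def image_mset_union prod_mset.union prod_unfold_prod_mset ..
    finally show ?thesis .
  qed
  have D1: "Dn (Suc s) = Dn s * (\<Prod>x\<in>K \<union> E. e + real s + x)"
    unfolding Dn_def by (simp add: pochhammer_Suc prod.distrib add_ac)
  have D2: "(\<Prod>x\<in>K \<union> E. e + real s + x) = B * U"
    unfolding B_def U_def using fin disj by (subst prod.union_disjoint) auto
  have Dpos: "Dn s' > 0" for s'
    unfolding Dn_def using pos e fin by (intro prod_pos pochhammer_pos) (auto simp: add_nonneg_pos)
  have Upos: "U > 0" unfolding U_def using pos e by (intro prod_pos) (auto simp: add_nonneg_pos)
  have Bpos: "B > 0" unfolding B_def using pos e by (intro prod_pos) (auto simp: add_nonneg_pos)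
  have Fd: "F s' = G s' / Dn s'" for s' unfolding F_def G_def Dn_def by simp
  have lhs: "(\<Prod>\<beta>\<in>K. e + real (Suc s) + \<beta> - 1) = B" unfolding B_def by (rule prod.cong) auto
  show ?thesis
    unfolding lhs Fd G1 G2 D1 D2 A_def[symmetric]
    using Dpos[of s] Upos Bpos by (simp add: field_simps)
qed



context L6 begin

definition "In = {b \<in> Bk. interior_pt a m b}"
definition "Bd = {b \<in> Bk. \<not> interior_pt a m b}"
definition "EE = {1 - real (S0 b) / real (l 0) | b. b \<in> Bk \<and> \<not> interior_pt a m b \<and> b \<noteq> bi}"
definition "TT = (\<lambda>k. real k / real (l 0)) ` {1..l 0}"
definition "KK = {\<beta>. \<exists>k\<in>{1..l 0}. \<beta> = real k / real (l 0) \<and> \<beta> \<notin> EE}"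
definition "AL = (\<Sum>r\<in>{1..m}. image_mset (\<lambda>\<sigma>. (coord a m bi r + real \<sigma>) / real (l r)) (mset [0..<l r]))"

lemma EE_img: "EE = (\<lambda>b. 1 - real (S0 b) / real (l 0)) ` (Bd - {bi})"
  unfolding EE_def Bd_def by auto

lemma s0_pos: "b \<in> Bk \<Longrightarrow> b \<noteq> bi \<Longrightarrow> S0 b > 0"
proof (rule ccontr)
  assume b: "b \<in> Bk" "b \<noteq> bi" and "\<not> S0 b > 0"
  hence "S0 b = S0 bi" using s0_bi by simp
  hence "b = bi" using inj_onD[OF s0_inj _ b(1) bi_Bk] by blast
  thus False using b by blast
qed

lemma bi_Bd: "bi \<in> Bd" using bi_Bk bi_bdry by (simp add: Bd_def)

lemma Bd_fin: "finite Bd" using Bk_finite by (simp add: Bd_def)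
lemma In_fin: "finite In" using Bk_finite by (simp add: In_def)

lemma frac_inj: "real s / real (l 0) = real s' / real (l 0) \<Longrightarrow> s = s'"
  using l0_pos by (simp add: divide_cancel_right)

lemma EE_sub: "EE \<subseteq> TT"
proof
  fix x assume "x \<in> EE"
  then obtain b where b: "b \<in> Bd - {bi}" "x = 1 - real (S0 b) / real (l 0)" unfolding EE_img by blast
  have bk: "b \<in> Bk" "b \<noteq> bi" using b by (auto simp: Bd_def)
  have lt: "S0 b < l 0" using s0_lt bk by blast
  have "x = real (l 0 - S0 b) / real (l 0)" using b(2) lt l0_pos by (simp add: of_nat_diff field_simps)
  moreover have "l 0 - S0 b \<in> {1..l 0}" using lt by auto
  ultimately show "x \<in> TT" unfolding TT_def by blast
qed

lemma EE_card: "card EE = card Bd - 1"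
proof -
  have "inj_on (\<lambda>b. 1 - real (S0 b) / real (l 0)) (Bd - {bi})"
  proof (rule inj_onI)
    fix b b' assume b: "b \<in> Bd - {bi}" "b' \<in> Bd - {bi}"
      and eq: "1 - real (S0 b) / real (l 0) = 1 - real (S0 b') / real (l 0)"
    hence "real (S0 b) / real (l 0) = real (S0 b') / real (l 0)" by linarith
    hence "S0 b = S0 b'" by (rule frac_inj)
    moreover have "b \<in> Bk" "b' \<in> Bk" using b by (auto simp: Bd_def)
    ultimately show "b = b'" using inj_onD[OF s0_inj] by blast
  qed
  hence "card EE = card (Bd - {bi})" unfolding EE_img by (rule card_image)
  thus ?thesis using bi_Bd by simp
qed

lemma TT_card: "card TT = l 0"
proof -
  have "inj_on (\<lambda>k. real k / real (l 0)) {1..l 0}"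
    by (rule inj_onI) (rule frac_inj)
  thus ?thesis unfolding TT_def by (simp add: card_image)
qed

lemma KK_eq: "KK = TT - EE" unfolding KK_def TT_def by auto

lemma TT_fin: "finite TT" unfolding TT_def by simp
lemma EE_fin: "finite EE" using EE_sub TT_fin finite_subset by blast
lemma KK_fin: "finite KK" using KK_eq TT_fin by simp

lemma In_Bd_card: "card In + card Bd = l 0"
proof -
  have "Bk = In \<union> Bd" "In \<inter> Bd = {}" by (auto simp: In_def Bd_def)
  hence "card Bk = card In + card Bd" using In_fin Bd_fin by (simp add: card_Un_disjoint)
  thus ?thesis using Bk_card by simp
qed

lemma Bd_card_pos: "card Bd \<ge> 1" using bi_Bd Bd_fin card_gt_0_iff[of Bd] by auto

lemma KK_card: "card KK = card In + 1"
proof -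
  have "card KK = card TT - card EE" unfolding KK_eq using EE_sub EE_fin by (simp add: card_Diff_subset)
  thus ?thesis using TT_card EE_card In_Bd_card Bd_card_pos by simp
qed

lemma AL_size: "size AL = l 0"
  unfolding AL_def by (simp add: size_sum_set l0_sum)

lemma EE_in_AL: "x \<in> EE \<Longrightarrow> x \<in># AL"
proof -
  assume "x \<in> EE"
  then obtain b where b: "b \<in> Bd - {bi}" "x = 1 - real (S0 b) / real (l 0)" unfolding EE_img by blast
  have bk: "b \<in> Bk" "b \<noteq> bi" "\<not> interior_pt a m b" using b by (auto simp: Bd_def)
  obtain r where r: "r \<in> {1..m}" "coord a m b r \<le> 0" using bk(3) unfolding interior_pt_def by (auto simp: not_less)
  have cb0: "coord a m b r = 0" using r Bk_coord[OF bk(1) r(1)] by simp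
  define s where "s = S0 b"
  have s: "0 < s" "s < l 0" using s0_pos s0_lt bk unfolding s_def by auto
  have lr: "l r > 0" using l_pos r by auto
  have "coord a m bi r + real s * (real (l r) / real (l 0)) \<in> \<int>"
    using s0_coord[OF bk(1) r(1)] cb0 unfolding s_def by simp
  then obtain k where k: "coord a m bi r + real s * (real (l r) / real (l 0)) = of_int k" using Ints_cases by metis
  have cbi: "0 \<le> coord a m bi r" "coord a m bi r < 1" using Bk_coord[OF bi_Bk r(1)] by auto
  have p1: "real s * (real (l r) / real (l 0)) > 0" using s lr l0_pos by simp
  have p2: "real s * (real (l r) / real (l 0)) < real (l r)"
  proof -
    have "real s / real (l 0) < 1" using s l0_pos by simp
    hence "real s / real (l 0) * real (l r) < 1 * real (l r)" using lr by (intro mult_strict_right_mono) auto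
    thus ?thesis by simp
  qed
  have "of_int k > (0::real)" using k cbi p1 by linarith
  hence k1: "k \<ge> 1" by simp
  have "of_int k < (of_int (int (l r) + 1)::real)" using k cbi p2 by simp
  hence "k < int (l r) + 1" by (simp only: of_int_less_iff)
  hence k2: "k \<le> int (l r)" by simp
  define \<sigma> where "\<sigma> = nat (int (l r) - k)"
  have sig: "\<sigma> < l r" using k1 k2 unfolding \<sigma>_def by simp
  have sr: "real \<sigma> = real (l r) - of_int k" using k2 unfolding \<sigma>_def by simp
  have "(coord a m bi r + real \<sigma>) / real (l r) = x"
    unfolding b(2) s_def[symmetric] sr using k[symmetric] lr l0_pos by (simp add: field_simps)
  hence "x \<in># image_mset (\<lambda>\<sigma>. (coord a m bi r + real \<sigma>) / real (l r)) (mset [0..<l r])"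
    using sig by auto
  thus "x \<in># AL" unfolding AL_def using r(1) by (intro in_sum_set) auto
qed

lemma EE_subm: "mset_set EE \<subseteq># AL"
  unfolding subseteq_mset_def
proof
  fix x show "count (mset_set EE) x \<le> count AL x"
    using EE_in_AL[of x] EE_fin by (auto simp: count_mset_set')
qed

end


context L6 begin

definition "ee b = real (S0 b) / real (l 0)"
definition "gg b = Abs_fps (\<lambda>s. complex_of_real (Fc a m l bi b s))"

lemma TT_eq: "KK \<union> EE = TT" using KK_eq EE_sub by auto

lemma Fc_form:
  assumes b: "b \<in> Bk"
  shows "Fc a m l bi b s = prod_mset (image_mset (\<lambda>\<alpha>. pochhammer (\<alpha> + ee b) s) AL) /
           (\<Prod>x\<in>KK \<union> EE. pochhammer (ee b + x) s)"
proof -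
  have num: "(\<Prod>r\<in>{1..m}. \<Prod>\<sigma><l r. pochhammer ((coord a m b r - sr a m l bi b r + real \<sigma>) / real (l r)) s)
      = prod_mset (image_mset (\<lambda>\<alpha>. pochhammer (\<alpha> + ee b) s) AL)"
  proof -
    have "(\<Prod>r\<in>{1..m}. \<Prod>\<sigma><l r. pochhammer ((coord a m b r - sr a m l bi b r + real \<sigma>) / real (l r)) s)
        = (\<Prod>r\<in>{1..m}. \<Prod>\<sigma><l r. pochhammer ((coord a m bi r + real \<sigma>) / real (l r) + ee b) s)"
    proof (rule prod.cong[OF refl], rule prod.cong[OF refl])
      fix r \<sigma> assume r: "r \<in> {1..m}"
      have lr: "real (l r) > 0" using l_pos r by auto
      have "(coord a m b r - sr a m l bi b r + real \<sigma>) / real (l r)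
          = (coord a m bi r + real (S0 b) * (real (l r) / real (l 0)) + real \<sigma>) / real (l r)"
        using sr_shift[OF b r] by simp
      also have "\<dots> = (coord a m bi r + real \<sigma>) / real (l r) + ee b"
        using lr l0_pos unfolding ee_def by (simp add: field_simps)
      finally show "pochhammer ((coord a m b r - sr a m l bi b r + real \<sigma>) / real (l r)) s =
          pochhammer ((coord a m bi r + real \<sigma>) / real (l r) + ee b) s" by simp
    qed
    also have "\<dots> = (\<Prod>r\<in>{1..m}. prod_mset (image_mset (\<lambda>\<alpha>. pochhammer (\<alpha> + ee b) s)
          (image_mset (\<lambda>\<sigma>. (coord a m bi r + real \<sigma>) / real (l r)) (mset [0..<l r]))))"
      by (simp only: pm_list)
    also have "\<dots> = prod_mset (image_mset (\<lambda>\<alpha>. pochhammer (\<alpha> + ee b) s) AL)"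
      unfolding AL_def by (rule pm_sum[symmetric]) simp
    finally show ?thesis .
  qed
  have den: "(\<Prod>t\<in>{1..l 0}. pochhammer ((real (S0 b) + real t) / real (l 0)) s)
      = (\<Prod>x\<in>KK \<union> EE. pochhammer (ee b + x) s)"
  proof -
    have inj: "inj_on (\<lambda>k. real k / real (l 0)) {1..l 0}" by (rule inj_onI) (rule frac_inj)
    have "(\<Prod>x\<in>KK \<union> EE. pochhammer (ee b + x) s) = (\<Prod>x\<in>TT. pochhammer (ee b + x) s)" unfolding TT_eq ..
    also have "\<dots> = (\<Prod>t\<in>{1..l 0}. pochhammer (ee b + real t / real (l 0)) s)"
      unfolding TT_def by (subst prod.reindex[OF inj]) (simp add: comp_def)
    also have "\<dots> = (\<Prod>t\<in>{1..l 0}. pochhammer ((real (S0 b) + real t) / real (l 0)) s)"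
      unfolding ee_def by (simp add: add_divide_distrib)
    finally show ?thesis by simp
  qed
  show ?thesis unfolding Fc_def num den ..
qed

lemma Fc_0: "Fc a m l bi b 0 = 1" unfolding Fc_def by simp

lemma ee_nonneg: "ee b \<ge> 0" unfolding ee_def by simp

lemma pos_TT: "x \<in> TT \<Longrightarrow> x > 0" unfolding TT_def using l0_pos by auto

definition "JJ = {b \<in> Bk. interior_pt a m b \<or> b = bi}"

lemma JJ_eq: "JJ = insert bi In" unfolding JJ_def In_def using bi_Bk by auto

lemma JJ_card: "card JJ = card In + 1"
proof -
  have "bi \<notin> In" using bi_bdry by (simp add: In_def)
  thus ?thesis unfolding JJ_eq using In_fin by simp
qed

lemma one_minus_ee_KK:
  assumes b: "b \<in> JJ"
  shows "1 - ee b \<in> KK"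
proof -
  have bk: "b \<in> Bk" using b by (simp add: JJ_def)
  have lt: "S0 b < l 0" using s0_lt bk by blast
  have eq: "1 - ee b = real (l 0 - S0 b) / real (l 0)"
    unfolding ee_def using lt l0_pos by (simp add: of_nat_diff field_simps)
  have notE: "1 - ee b \<notin> EE"
  proof
    assume "1 - ee b \<in> EE"
    then obtain b' where b': "b' \<in> Bd - {bi}" "1 - ee b = 1 - real (S0 b') / real (l 0)" unfolding EE_img by blast
    hence "real (S0 b) / real (l 0) = real (S0 b') / real (l 0)" unfolding ee_def by linarith
    hence "S0 b = S0 b'" by (rule frac_inj)
    moreover have "b' \<in> Bk" using b' by (auto simp: Bd_def)
    ultimately have "b = b'" using inj_onD[OF s0_inj] bk by blast
    thus False using b b' by (auto simp: JJ_def Bd_def)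
  qed
  have "l 0 - S0 b \<in> {1..l 0}" using lt by auto
  thus ?thesis unfolding KK_def using eq notE by blast
qed

lemma sol:
  assumes b: "b \<in> JJ"
  shows "hyp_solution (mset_set KK) (AL - mset_set EE) (ee b) (gg b)"
  unfolding hyp_solution_def
proof
  fix s
  have bk: "b \<in> Bk" using b by (simp add: JJ_def)
  show "hyp_apply (mset_set KK) (AL - mset_set EE) (ee b) (gg b) s = 0"
  proof (cases s)
    case 0
    have mem: "1 - ee b \<in># mset_set KK" using one_minus_ee_KK[OF b] KK_fin by simp
    have "complex_of_real (ee b + real 0 + (1 - ee b) - 1) \<in># image_mset (\<lambda>\<beta>. complex_of_real (ee b + real 0 + \<beta> - 1)) (mset_set KK)"
      using mem by (rule imageI[THEN subst[OF set_image_mset[symmetric], of "\<lambda>X. _ \<in> X"]])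
    hence "0 \<in># image_mset (\<lambda>\<beta>. complex_of_real (ee b + real 0 + \<beta> - 1)) (mset_set KK)" by simp
    hence "prod_mset (image_mset (\<lambda>\<beta>. complex_of_real (ee b + real 0 + \<beta> - 1)) (mset_set KK)) = 0"
      by (simp add: prod_mset_zero_iff)
    thus ?thesis unfolding hyp_apply_def 0 by simp
  next
    case (Suc s')
    have R: "(\<Prod>\<beta>\<in>KK. ee b + real (Suc s') + \<beta> - 1) * Fc a m l bi b (Suc s') =
         prod_mset (image_mset (\<lambda>\<alpha>. ee b + real s' + \<alpha>) (AL - mset_set EE)) * Fc a m l bi b s'"
      unfolding Fc_form[OF bk]
      by (rule recur[OF EE_fin KK_fin _ EE_subm _ ee_nonneg])
         (use KK_eq pos_TT TT_eq in auto)
    have "complex_of_real ((\<Prod>\<beta>\<in>KK. ee b + real (Suc s') + \<beta> - 1) * Fc a m l bi b (Suc s')) =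
         complex_of_real (prod_mset (image_mset (\<lambda>\<alpha>. ee b + real s' + \<alpha>) (AL - mset_set EE)) * Fc a m l bi b s')"
      using R by simp
    hence "prod_mset (image_mset (\<lambda>\<beta>. complex_of_real (ee b + real (Suc s') + \<beta> - 1)) (mset_set KK)) * complex_of_real (Fc a m l bi b (Suc s')) =
         prod_mset (image_mset (\<lambda>\<alpha>. complex_of_real (ee b + real s' + \<alpha>)) (AL - mset_set EE)) * complex_of_real (Fc a m l bi b s')"
      by (simp only: of_real_mult of_real_prod_mset prod_unfold_prod_mset)
    thus ?thesis unfolding hyp_apply_def Suc gg_def by simp
  qed
qed

lemma ee_diff_not_nat:
  assumes "b \<in> Bk" "b' \<in> Bk" "b \<noteq> b'"
  shows "ee b - ee b' \<notin> \<nat>"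
proof
  assume "ee b - ee b' \<in> \<nat>"
  hence I: "ee b - ee b' \<in> \<int>" using Nats_subset_Ints by blast
  have "S0 b < l 0" "S0 b' < l 0" using s0_lt assms by auto
  hence "\<bar>real (S0 b) - real (S0 b')\<bar> < real (l 0)" by linarith
  hence "\<bar>real (S0 b) - real (S0 b')\<bar> / real (l 0) < 1" using l0_pos by simp
  hence "\<bar>ee b - ee b'\<bar> < 1" unfolding ee_def by (simp add: diff_divide_distrib[symmetric])
  hence "ee b - ee b' = 0" using Ints_small I by blast
  hence "real (S0 b) / real (l 0) = real (S0 b') / real (l 0)" unfolding ee_def by simp
  hence "S0 b = S0 b'" by (rule frac_inj)
  thus False using inj_onD[OF s0_inj] assms by blast
qed

lemma indep:
  assumes c: "\<forall>t. (\<Sum>j\<in>JJ. c j * gser_coeff (ee j) (gg j) t) = 0"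
  shows "\<forall>j\<in>JJ. c j = 0"
proof
  fix b assume b: "b \<in> JJ"
  have fin: "finite JJ" unfolding JJ_eq using In_fin by simp
  have "(\<Sum>j\<in>JJ. c j * gser_coeff (ee j) (gg j) (ee b)) =
      c b * gser_coeff (ee b) (gg b) (ee b) + (\<Sum>j\<in>JJ - {b}. c j * gser_coeff (ee j) (gg j) (ee b))"
    using fin b by (rule sum.remove)
  also have "(\<Sum>j\<in>JJ - {b}. c j * gser_coeff (ee j) (gg j) (ee b)) = 0"
  proof (rule sum.neutral, rule ballI)
    fix j assume j: "j \<in> JJ - {b}"
    have "ee b - ee j \<notin> \<nat>" using ee_diff_not_nat[of b j] j b by (auto simp: JJ_def)
    thus "c j * gser_coeff (ee j) (gg j) (ee b) = 0" by (simp add: gser_coeff_def)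
  qed
  also have "gser_coeff (ee b) (gg b) (ee b) = 1"
    by (simp add: gser_coeff_def gg_def Fc_0)
  finally have "(\<Sum>j\<in>JJ. c j * gser_coeff (ee j) (gg j) (ee b)) = c b" by simp
  thus "c b = 0" using c by simp
qed

lemma main:
  "let Bk = Bset a m \<inter> C;
         Rk = card {b \<in> Bk. interior_pt a m b};
         E = {1 - real (s0 a m l bi b) / real (l 0) | b. b \<in> Bk \<and> \<not> interior_pt a m b \<and> b \<noteq> bi};
         betas = mset_set {\<beta>. \<exists>k\<in>{1..l 0}. \<beta> = real k / real (l 0) \<and> \<beta> \<notin> E};
         alist = (\<Sum>r\<in>{1..m}. image_mset (\<lambda>\<sigma>. (coord a m bi r + real \<sigma>) / real (l r)) (mset [0..<l r]));
         alphas = alist - mset_set E;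
         J = {b \<in> Bk. interior_pt a m b \<or> b = bi}
     in size betas = Rk + 1 \<and> mset_set E \<subseteq># alist \<and> size alphas = Rk + 1 \<and>
        (\<exists>g :: real^'n \<Rightarrow> complex fps.
           full_solution_set betas alphas J (\<lambda>b. real (s0 a m l bi b) / real (l 0)) g \<and>
           (\<forall>b\<in>J. \<forall>n. fps_nth (Fser a m l bi b) n =
               (if s0 a m l bi b \<le> n \<and> l 0 dvd (n - s0 a m l bi b)
                then fps_nth (g b) ((n - s0 a m l bi b) div l 0) else 0)))"
proof -
  have e1: "Bset a m \<inter> C = Bk" by (simp add: Bk_def)
  have e2: "{b \<in> Bk. interior_pt a m b} = In" by (simp add: In_def)
  have e3: "{1 - real (s0 a m l bi b) / real (l 0) | b. b \<in> Bk \<and> \<not> interior_pt a m b \<and> b \<noteq> bi} = EE"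
    by (simp add: EE_def)
  have e4: "{\<beta>. \<exists>k\<in>{1..l 0}. \<beta> = real k / real (l 0) \<and> \<beta> \<notin> EE} = KK" by (simp add: KK_def)
  have e5: "(\<Sum>r\<in>{1..m}. image_mset (\<lambda>\<sigma>. (coord a m bi r + real \<sigma>) / real (l r)) (mset [0..<l r])) = AL"
    by (simp add: AL_def)
  have e6: "{b \<in> Bk. interior_pt a m b \<or> b = bi} = JJ" by (simp add: JJ_def)
  have e7: "(\<lambda>b. real (s0 a m l bi b) / real (l 0)) = ee" by (simp add: ee_def fun_eq_iff)
  have c1: "size (mset_set KK) = card In + 1" using KK_card by simp
  have c3: "size (AL - mset_set EE) = card In + 1"
    using size_Diff_submset[OF EE_subm] AL_size EE_card In_Bd_card Bd_card_pos EE_fin by simp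
  have fs: "full_solution_set (mset_set KK) (AL - mset_set EE) JJ ee gg"
    unfolding full_solution_set_def
  proof (intro conjI)
    show "finite JJ" unfolding JJ_eq using In_fin by simp
    show "card JJ = size (mset_set KK)" using JJ_card c1 by simp
    show "\<forall>j\<in>JJ. hyp_solution (mset_set KK) (AL - mset_set EE) (ee j) (gg j)" using sol by blast
    show "\<forall>c. (\<forall>t. (\<Sum>j\<in>JJ. c j * gser_coeff (ee j) (gg j) t) = 0) \<longrightarrow> (\<forall>j\<in>JJ. c j = 0)"
      using indep by blast
  qed
  have fser: "\<forall>b\<in>JJ. \<forall>n. fps_nth (Fser a m l bi b) n =
               (if s0 a m l bi b \<le> n \<and> l 0 dvd (n - s0 a m l bi b)
                then fps_nth (gg b) ((n - s0 a m l bi b) div l 0) else 0)"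
    by (simp add: Fser_def gg_def Let_def)
  show ?thesis unfolding Let_def e1 e2 e3 e4 e5 e6 e7
    using c1 c3 EE_subm fs fser by blast
qed

end


theorem theorem6p18:
  fixes a :: "nat \<Rightarrow> real^'n" and m :: nat and l :: "nat \<Rightarrow> nat"
    and C :: "(real^'n) set" and bi :: "real^'n"
  assumes A_int: "\<forall>j\<in>{0..m}. intvec (a j)"
    and A_inj: "inj_on a {1..m}"
    and A_indep: "independent (a ` {1..m})"
    and l_pos: "\<forall>j\<in>{0..m}. l j > 0"
    and l_gcd: "Gcd (l ` {0..m}) = 1"
    and rel: "real (l 0) *\<^sub>R a 0 = (\<Sum>j\<in>{1..m}. real (l j) *\<^sub>R a j)"
    and l0_sum: "l 0 = (\<Sum>j\<in>{1..m}. l j)"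
    and coset: "\<exists>x\<in>VZ a m. C = (\<lambda>z. x + z) ` ZAplus a m"
    and bi_in: "bi \<in> Bset a m \<inter> C"
    and bi_bdry: "\<not> interior_pt a m bi"
  shows
    "let Bk = Bset a m \<inter> C;
         Rk = card {b \<in> Bk. interior_pt a m b};
         E = {1 - real (s0 a m l bi b) / real (l 0) | b. b \<in> Bk \<and> \<not> interior_pt a m b \<and> b \<noteq> bi};
         betas = mset_set {\<beta>. \<exists>k\<in>{1..l 0}. \<beta> = real k / real (l 0) \<and> \<beta> \<notin> E};
         alist = (\<Sum>r\<in>{1..m}. image_mset (\<lambda>\<sigma>. (coord a m bi r + real \<sigma>) / real (l r)) (mset [0..<l r]));
         alphas = alist - mset_set E;
         J = {b \<in> Bk. interior_pt a m b \<or> b = bi}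
     in size betas = Rk + 1 \<and> mset_set E \<subseteq># alist \<and> size alphas = Rk + 1 \<and>
        (\<exists>g :: real^'n \<Rightarrow> complex fps.
           full_solution_set betas alphas J (\<lambda>b. real (s0 a m l bi b) / real (l 0)) g \<and>
           (\<forall>b\<in>J. \<forall>n. fps_nth (Fser a m l bi b) n =
               (if s0 a m l bi b \<le> n \<and> l 0 dvd (n - s0 a m l bi b)
                then fps_nth (g b) ((n - s0 a m l bi b) div l 0) else 0)))"
proof -
  interpret L6 a m l C bi
    by (rule L6.intro[OF A_int A_inj A_indep l_pos l_gcd rel l0_sum coset bi_in bi_bdry])
  show ?thesis by (rule main)
qed

end
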